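(* Fix a nonempty $A\subseteq S$ and $w\in A$, and let $E_0=\{\tau_{\mathcal E_N^w}=\tau_{\mathcal E_N(A)}\}$. Let $x,y\in S$ be distinct with $r(x,y)>r(y,x)>0$, and let $q_{x,y}=r(y,x)/r(x,y)$. Then, as $N\to\infty$, $$\Big|\mathbb P_{\zeta_1^{x,y}}[E_0]-\frac{q_{x,y}-q_{x,y}^N}{1-q_{x,y}^N}\mathbb P_{\xi_N^x}[E_0]-\frac{1-q_{x,y}}{1-q_{x,y}^N}\mathbb P_{\xi_N^y}[E_0]\Big|=O(d_N\log N)$$ and $$\Big|\mathbb P_{\zeta_{N-1}^{x,y}}[E_0]-\frac{q_{x,y}^{N-1}-q_{x,y}^N}{1-q_{x,y}^N}\mathbb P_{\xi_N^x}[E_0]-\frac{1-q_{x,y}^{N-1}}{1-q_{x,y}^N}\mathbb P_{\xi_N^y}[E_0]\Big|=O(d_N\log N).$$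
   Context: $S$ is finite; $r:S\times S\to[0,\infty)$, $r(x,x)=0$, are the rates of an irreducible continuous-time Markov chain on $S$. $\mathcal H_N=\{\eta\in\{0,1,2,\dots\}^S:\sum_x\eta_x=N\}$; $\sigma^{x,y}\eta$ moves one particle from $x$ to $y$ (if $\eta_x\ge1$; else $\sigma^{x,y}\eta=\eta$). With $d_N>0$, $d_N\to0$, the inclusion process is the Markov chain on $\mathcal H_N$ with generator $(\mathcal L_NF)(\eta)=\sum_{x\ne y}\eta_x(d_N+\eta_y)r(x,y)\{F(\sigma^{x,y}\eta)-F(\eta)\}$; $\mathbb P_\eta$ its law from $\eta$; $\tau_{\mathcal C}$ the hitting time of $\mathcal C\subseteq\mathcal H_N$. $\xi_N^z$: all $N$ particles at $z$; $\mathcal E_N^z=\{\xi_N^z\}$, $\mathcal E_N(A)=\bigcup_{z\in A}\mathcal E_N^z$. For $0\le i\le N$, $\zeta_i^{x,y}$ is the configuration with $N-i$ particles at $x$, $i$ at $y$, none elsewhere (so $\zeta_0^{x,y}=\xi_N^x$, $\zeta_N^{x,y}=\xi_N^y$). $O(\cdot)$ has constant independent of $N$. *)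

theory Defs
  imports "HOL-Analysis.Analysis" "HOL-Library.Landau_Symbols"
begin

text \<open>Configurations: functions S \<Rightarrow> nat, with S a finite type. The number of
particles of a configuration is its total mass.\<close>

definition conc :: "nat \<Rightarrow> 'a \<Rightarrow> ('a \<Rightarrow> nat)" where
  "conc N z = (\<lambda>u. if u = z then N else 0)"

definition zeta :: "nat \<Rightarrow> 'a \<Rightarrow> 'a \<Rightarrow> nat \<Rightarrow> ('a \<Rightarrow> nat)" where
  "zeta N x y i = (\<lambda>u. if u = x then N - i else if u = y then i else 0)"

definition move :: "'a \<Rightarrow> 'a \<Rightarrow> ('a \<Rightarrow> nat) \<Rightarrow> ('a \<Rightarrow> nat)" where
  "move x y \<eta> = (if 1 \<le> \<eta> x then \<eta>(x := \<eta> x - 1, y := \<eta> y + 1) else \<eta>)"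

definition incl_rate :: "real \<Rightarrow> ('a \<Rightarrow> 'a \<Rightarrow> real) \<Rightarrow> ('a \<Rightarrow> nat) \<Rightarrow> 'a \<Rightarrow> 'a \<Rightarrow> real" where
  "incl_rate dN r \<eta> x y = real (\<eta> x) * (dN + real (\<eta> y)) * r x y"

definition incl_total :: "real \<Rightarrow> ('a::finite \<Rightarrow> 'a \<Rightarrow> real) \<Rightarrow> ('a \<Rightarrow> nat) \<Rightarrow> real" where
  "incl_total dN r \<eta> = (\<Sum>x\<in>UNIV. \<Sum>y\<in>UNIV - {x}. incl_rate dN r \<eta> x y)"

definition in_EA :: "'a set \<Rightarrow> ('a::finite \<Rightarrow> nat) \<Rightarrow> bool" where
  "in_EA A \<eta> \<longleftrightarrow> (\<exists>z\<in>A. \<eta> = conc (sum \<eta> UNIV) z)"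

text \<open>hit_steps dN r A w n eta: probability, for the inclusion process (with
parameter dN) started from eta, that the set E(A) is hit within at most n jumps
and that it is hit first at the configuration xi^w. (Hitting events of a
continuous-time chain depend only on its embedded jump chain.)\<close>
fun hit_steps :: "real \<Rightarrow> ('a::finite \<Rightarrow> 'a \<Rightarrow> real) \<Rightarrow> 'a set \<Rightarrow> 'a \<Rightarrow> nat \<Rightarrow> ('a \<Rightarrow> nat) \<Rightarrow> real" where
  "hit_steps dN r A w 0 \<eta> = (if \<eta> = conc (sum \<eta> UNIV) w then 1 else 0)"
| "hit_steps dN r A w (Suc n) \<eta> =
     (if in_EA A \<eta> then (if \<eta> = conc (sum \<eta> UNIV) w then 1 else 0)
      else (\<Sum>x\<in>UNIV. \<Sum>y\<in>UNIV - {x}.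
               incl_rate dN r \<eta> x y * hit_steps dN r A w n (move x y \<eta>)) / incl_total dN r \<eta>)"

text \<open>P_eta[ tau_{E^w} = tau_{E(A)} ], as the limit of the increasing sequence above.\<close>
definition hit_prob :: "real \<Rightarrow> ('a::finite \<Rightarrow> 'a \<Rightarrow> real) \<Rightarrow> 'a set \<Rightarrow> 'a \<Rightarrow> ('a \<Rightarrow> nat) \<Rightarrow> real" where
  "hit_prob dN r A w \<eta> = lim (\<lambda>n. hit_steps dN r A w n \<eta>)"

end

theory Submission
  imports Defs
begin

lemma neg_part_bound:
  fixes \<delta> \<rho> \<eta> :: "nat \<Rightarrow> real" and q' :: real and M :: nat
  assumes q1: "q' < 1" and rho: "\<forall>k. 0 \<le> \<rho> k \<and> \<rho> k \<le> q'"
    and eta: "\<forall>k. 0 \<le> \<eta> k"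
    and rec: "\<forall>k. k < M \<longrightarrow> \<rho> k * \<delta> k - \<eta> k \<le> \<delta> (Suc k)"
    and s: "(\<Sum>k<Suc M. \<delta> k) = 0" and d0: "0 \<le> \<delta> 0"
  shows "\<delta> 0 \<le> (\<Sum>k<M. \<eta> k) / (1 - q')"
proof -
  define n where "n k = max 0 (- \<delta> k)" for k
  have q0: "0 \<le> q'" using rho by (meson order_trans)
  have nn: "0 \<le> n k" for k unfolding n_def by simp
  have n0: "n 0 = 0" unfolding n_def using d0 by simp
  have step: "n (Suc k) \<le> q' * n k + \<eta> k" if k: "k < M" for k
  proof (cases "0 \<le> \<delta> k")
    case True
    have "\<rho> k * \<delta> k \<ge> 0" using True rho by simp
    then have "- \<delta> (Suc k) \<le> \<eta> k" using rec k by force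
    moreover have "n k = 0" using True unfolding n_def by simp
    ultimately show ?thesis unfolding n_def using eta by simp
  next
    case False
    have "\<rho> k * \<delta> k \<ge> q' * \<delta> k" using False rho by (simp add: mult_right_mono_neg)
    then have "- \<delta> (Suc k) \<le> q' * (- \<delta> k) + \<eta> k" using rec k by force
    moreover have "n k = - \<delta> k" using False unfolding n_def by simp
    ultimately have c1: "- \<delta> (Suc k) \<le> q' * n k + \<eta> k" by simp
    have c2: "0 \<le> q' * n k + \<eta> k" using nn[of k] q0 eta by simp
    show ?thesis unfolding n_def[of "Suc k"] using c1 c2 by (simp only: max.bounded_iff)
  qed
  define T where "T = (\<Sum>k<M. n (Suc k))"
  have T1: "(\<Sum>k<Suc M. n k) = T" unfolding T_def by (simp only: sum.lessThan_Suc_shift n0)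
  have "T \<le> (\<Sum>k<M. q' * n k + \<eta> k)" unfolding T_def using step by (intro sum_mono) auto
  also have "\<dots> = q' * (\<Sum>k<M. n k) + (\<Sum>k<M. \<eta> k)" by (simp add: sum.distrib sum_distrib_left)
  also have "(\<Sum>k<M. n k) \<le> (\<Sum>k<Suc M. n k)" using nn by (simp)
  then have "q' * (\<Sum>k<M. n k) \<le> q' * T" using T1 q0 by (simp add: mult_left_mono)
  finally have "T \<le> q' * T + (\<Sum>k<M. \<eta> k)" by simp
  then have T2: "T \<le> (\<Sum>k<M. \<eta> k) / (1 - q')" using q1 by (simp add: field_simps)
  have "\<delta> 0 = - (\<Sum>k<M. \<delta> (Suc k))" using s unfolding sum.lessThan_Suc_shift by linarith
  also have "\<dots> \<le> T" unfolding T_def n_def by (simp add: sum_negf[symmetric] sum_mono)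
  finally show ?thesis using T2 by simp
qed

lemma abs_part_bound:
  fixes \<delta> \<rho> \<eta> :: "nat \<Rightarrow> real" and q' :: real and M :: nat
  assumes q1: "q' < 1" and rho: "\<forall>k. 0 \<le> \<rho> k \<and> \<rho> k \<le> q'"
    and eta: "\<forall>k. 0 \<le> \<eta> k"
    and rec: "\<forall>k. k < M \<longrightarrow> \<bar>\<delta> (Suc k) - \<rho> k * \<delta> k\<bar> \<le> \<eta> k"
    and s: "(\<Sum>k<Suc M. \<delta> k) = 0"
  shows "\<bar>\<delta> 0\<bar> \<le> (\<Sum>k<M. \<eta> k) / (1 - q')"
proof (cases "0 \<le> \<delta> 0")
  case True
  have "\<delta> 0 \<le> (\<Sum>k<M. \<eta> k) / (1 - q')"
    by (rule neg_part_bound[OF q1 rho eta _ s True]) (use rec in \<open>auto simp: abs_le_iff\<close>)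
  then show ?thesis using True by simp
next
  case False
  have "- \<delta> 0 \<le> (\<Sum>k<M. \<eta> k) / (1 - q')"
    by (rule neg_part_bound[OF q1 rho eta, of M "\<lambda>k. - \<delta> k"])
       (use rec s False in \<open>auto simp: abs_le_iff sum_negf\<close>)
  then show ?thesis using False by simp
qed

lemma abs_prop_bound:
  fixes \<delta> \<rho> \<eta> :: "nat \<Rightarrow> real" and M :: nat
  assumes rho: "\<forall>k. 0 \<le> \<rho> k \<and> \<rho> k \<le> 1"
    and rec: "\<forall>k. k < M \<longrightarrow> \<bar>\<delta> (Suc k) - \<rho> k * \<delta> k\<bar> \<le> \<eta> k"
  shows "k \<le> M \<Longrightarrow> \<bar>\<delta> k\<bar> \<le> \<bar>\<delta> 0\<bar> + (\<Sum>j<k. \<eta> j)"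
proof (induction k)
  case 0 then show ?case by simp
next
  case (Suc k)
  have "\<bar>\<rho> k * \<delta> k\<bar> \<le> \<bar>\<delta> k\<bar>" using rho by (simp add: abs_mult mult_left_le_one_le)
  moreover have "\<bar>\<delta> (Suc k) - \<rho> k * \<delta> k\<bar> \<le> \<eta> k" using rec Suc.prems by simp
  ultimately have "\<bar>\<delta> (Suc k)\<bar> \<le> \<bar>\<delta> k\<bar> + \<eta> k" by linarith
  then show ?case using Suc by simp
qed

lemma step_bound:
  fixes a b q d N K D1 D0 t m :: real
  assumes a: "0 < m" "m \<le> a" and rec: "\<bar>a * D1 - b * D0\<bar> \<le> K * N * d"
    and bq: "\<bar>b - q * a\<bar> \<le> d * N" and t: "\<bar>t\<bar> \<le> 1"
  shows "\<bar>(D1 - q * t) - (b / a) * (D0 - t)\<bar> \<le> (K + 1) * N * d / m"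
proof -
  have a0: "0 < a" using a by simp
  have eq: "(D1 - q * t) - (b / a) * (D0 - t) = (a * D1 - b * D0) / a + ((b - q * a) / a) * t"
    using a0 by (simp add: field_simps)
  have "\<bar>((b - q * a) / a) * t\<bar> \<le> \<bar>(b - q * a) / a\<bar>"
    using t by (simp only: abs_mult) (rule mult_left_le; simp)
  also have "\<dots> \<le> d * N / a" using bq a0 by (simp add: divide_right_mono)
  finally have 1: "\<bar>((b - q * a) / a) * t\<bar> \<le> d * N / a" .
  have 2: "\<bar>(a * D1 - b * D0) / a\<bar> \<le> K * N * d / a" using rec a0 by (simp add: divide_right_mono)
  have "\<bar>(D1 - q * t) - (b / a) * (D0 - t)\<bar> \<le> (K + 1) * N * d / a"
    unfolding eq
  proof -
    have e: "K * N * d + d * N = (K + 1) * N * d" by algebra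
    have "\<bar>(a * D1 - b * D0) / a + ((b - q * a) / a) * t\<bar> \<le> \<bar>(a * D1 - b * D0) / a\<bar> + \<bar>((b - q * a) / a) * t\<bar>"
      by (rule abs_triangle_ineq)
    also have "\<dots> \<le> K * N * d / a + d * N / a" using 1 2 by linarith
    also have "\<dots> = (K * N * d + d * N) / a" by (simp only: add_divide_distrib)
    also have "\<dots> = (K + 1) * N * d / a" by (simp only: e)
    finally show "\<bar>(a * D1 - b * D0) / a + ((b - q * a) / a) * t\<bar> \<le> (K + 1) * N * d / a" .
  qed
  also have "\<dots> \<le> (K + 1) * N * d / m"
  proof (rule divide_left_mono)
    have "0 \<le> K * N * d" using rec abs_ge_zero order_trans by blast
    moreover have "0 \<le> d * N" using bq abs_ge_zero order_trans by blast
    moreover have "K * N * d + d * N = (K + 1) * N * d" by algebra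
    ultimately show "0 \<le> (K + 1) * N * d" by linarith
  qed (use a in auto)
  finally show ?thesis .
qed

lemma harm_ln: "n \<ge> 1 \<Longrightarrow> (\<Sum>k<n. 1 / real (Suc k)) \<le> 1 + ln (real n)"
proof (induction n rule: dec_induct)
  case base then show ?case by simp
next
  case (step n)
  have "1 / real (Suc n) \<le> ln (real (Suc n)) - ln (real n)"
  proof -
    have "ln (real n / real (Suc n)) \<le> real n / real (Suc n) - 1"
      using step by (intro ln_le_minus_one) auto
    also have "\<dots> = - (1 / real (Suc n))" by (simp add: field_simps)
    finally show ?thesis using step by (simp add: ln_div)
  qed
  then show ?case using step by simp
qed


lemma hs_unfold:
  assumes "\<not> in_EA A \<eta>"
  shows "hit_steps dN r A w (Suc m) \<eta> = (\<Sum>x\<in>UNIV. \<Sum>y\<in>UNIV - {x}.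
               incl_rate dN r \<eta> x y * hit_steps dN r A w m (move x y \<eta>)) / incl_total dN r \<eta>"
  using assms by (simp only: hit_steps.simps(2) if_False)

lemma hs_EA:
  assumes "in_EA A \<eta>"
  shows "hit_steps dN r A w (Suc m) \<eta> = (if \<eta> = conc (sum \<eta> UNIV) w then 1 else 0)"
  using assms by (simp only: hit_steps.simps(2) if_True)

lemma hs_0: "hit_steps dN r A w 0 \<eta> = (if \<eta> = conc (sum \<eta> UNIV) w then 1 else 0)"
  by (simp only: hit_steps.simps(1))

lemma rate_nn:
  assumes d: "0 < dN" and rn: "\<forall>a b. 0 \<le> r a b"
  shows "0 \<le> incl_rate dN r \<eta> a b"
  unfolding incl_rate_def using d rn by simp

lemma total_nn:
  assumes d: "0 < dN" and rn: "\<forall>a b. 0 \<le> r a b"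
  shows "0 \<le> incl_total dN r \<eta>"
  unfolding incl_total_def using rate_nn[OF d rn] by (intro sum_nonneg) auto

lemma hs_bounds:
  assumes d: "0 < dN" and rn: "\<forall>a b. 0 \<le> r a b"
  shows "0 \<le> hit_steps dN r A w n \<eta> \<and> hit_steps dN r A w n \<eta> \<le> 1"
proof (induction n arbitrary: \<eta>)
  case 0 then show ?case by simp
next
  case (Suc n)
  show ?case
  proof (cases "in_EA A \<eta>")
    case True then show ?thesis unfolding hs_EA[OF True] by simp
  next
    case False
    let ?S = "(\<Sum>x\<in>UNIV. \<Sum>y\<in>UNIV - {x}. incl_rate dN r \<eta> x y * hit_steps dN r A w n (move x y \<eta>))"
    have S0: "0 \<le> ?S"
    proof (intro sum_nonneg)
      fix x y show "0 \<le> incl_rate dN r \<eta> x y * hit_steps dN r A w n (move x y \<eta>)"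
        using rate_nn[OF d rn] conjunct1[OF Suc.IH] by simp
    qed
    have S1: "?S \<le> incl_total dN r \<eta>" unfolding incl_total_def
    proof (intro sum_mono)
      fix x y show "incl_rate dN r \<eta> x y * hit_steps dN r A w n (move x y \<eta>) \<le> incl_rate dN r \<eta> x y"
        using mult_left_le[OF conjunct2[OF Suc.IH] rate_nn[OF d rn]] .
    qed
    have "0 \<le> ?S / incl_total dN r \<eta>" using S0 S1 by simp
    moreover have "?S / incl_total dN r \<eta> \<le> 1" using S0 S1
      by (cases "incl_total dN r \<eta> = 0") (auto simp: divide_le_eq_1)
    ultimately show ?thesis unfolding hs_unfold[OF False] by blast
  qed
qed

lemma hs_mono:
  assumes d: "0 < dN" and rn: "\<forall>a b. 0 \<le> r a b" and wA: "w \<in> A"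
  shows "hit_steps dN r A w n \<eta> \<le> hit_steps dN r A w (Suc n) \<eta>"
proof (induction n arbitrary: \<eta>)
  case 0
  show ?case
  proof (cases "in_EA A \<eta>")
    case True then show ?thesis unfolding hs_EA[OF True] hs_0 by simp
  next
    case False
    then have "\<eta> \<noteq> conc (sum \<eta> UNIV) w" using wA unfolding in_EA_def by auto
    then have "hit_steps dN r A w 0 \<eta> = 0" unfolding hs_0 by simp
    moreover have "0 \<le> hit_steps dN r A w (Suc 0) \<eta>" by (rule conjunct1[OF hs_bounds[OF d rn]])
    ultimately show ?thesis by linarith
  qed
next
  case (Suc n)
  show ?case
  proof (cases "in_EA A \<eta>")
    case True then show ?thesis unfolding hs_EA[OF True] by simp
  next
    case False
    have "(\<Sum>x\<in>UNIV. \<Sum>y\<in>UNIV - {x}. incl_rate dN r \<eta> x y * hit_steps dN r A w n (move x y \<eta>))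
       \<le> (\<Sum>x\<in>UNIV. \<Sum>y\<in>UNIV - {x}. incl_rate dN r \<eta> x y * hit_steps dN r A w (Suc n) (move x y \<eta>))"
    proof (intro sum_mono)
      fix x y show "incl_rate dN r \<eta> x y * hit_steps dN r A w n (move x y \<eta>)
        \<le> incl_rate dN r \<eta> x y * hit_steps dN r A w (Suc n) (move x y \<eta>)"
        by (intro mult_left_mono Suc.IH rate_nn[OF d rn])
    qed
    then show ?thesis unfolding hs_unfold[OF False]
      using total_nn[OF d rn] by (rule divide_right_mono)
  qed
qed

lemma hs_lim:
  assumes d: "0 < dN" and rn: "\<forall>a b. 0 \<le> r a b" and wA: "w \<in> A"
  shows "(\<lambda>n. hit_steps dN r A w n \<eta>) \<longlonglongrightarrow> hit_prob dN r A w \<eta>"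
proof -
  have "incseq (\<lambda>n. hit_steps dN r A w n \<eta>)"
    using hs_mono[OF d rn wA] by (simp add: incseq_Suc_iff)
  moreover have b: "\<forall>i. hit_steps dN r A w i \<eta> \<le> 1" using hs_bounds[OF d rn] by blast
  ultimately obtain L where "(\<lambda>n. hit_steps dN r A w n \<eta>) \<longlonglongrightarrow> L"
    using incseq_convergent by blast
  then show ?thesis unfolding hit_prob_def by (simp add: limI)
qed

lemma hp_bounds:
  assumes d: "0 < dN" and rn: "\<forall>a b. 0 \<le> r a b" and wA: "w \<in> A"
  shows "0 \<le> hit_prob dN r A w \<eta> \<and> hit_prob dN r A w \<eta> \<le> 1"
proof
  show "0 \<le> hit_prob dN r A w \<eta>"
    by (rule LIMSEQ_le_const[OF hs_lim[OF d rn wA]]) (use hs_bounds[OF d rn] in blast)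
  show "hit_prob dN r A w \<eta> \<le> 1"
    by (rule LIMSEQ_le_const2[OF hs_lim[OF d rn wA]]) (use hs_bounds[OF d rn] in blast)
qed

lemma hp_harm:
  assumes d: "0 < dN" and rn: "\<forall>a b. 0 \<le> r a b" and wA: "w \<in> A" and ne: "\<not> in_EA A \<eta>"
  shows "hit_prob dN r A w \<eta> = (\<Sum>x\<in>UNIV. \<Sum>y\<in>UNIV - {x}.
               incl_rate dN r \<eta> x y * hit_prob dN r A w (move x y \<eta>)) / incl_total dN r \<eta>"
proof -
  have "(\<lambda>n. hit_steps dN r A w (Suc n) \<eta>) \<longlonglongrightarrow> hit_prob dN r A w \<eta>"
    using hs_lim[OF d rn wA] by (rule LIMSEQ_Suc)
  moreover have "(\<lambda>n. hit_steps dN r A w (Suc n) \<eta>) \<longlonglongrightarrow> (\<Sum>x\<in>UNIV. \<Sum>y\<in>UNIV - {x}.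
               incl_rate dN r \<eta> x y * hit_prob dN r A w (move x y \<eta>)) / incl_total dN r \<eta>"
    unfolding hs_unfold[OF ne] divide_inverse
    by (intro tendsto_mult_right tendsto_sum tendsto_mult_left hs_lim[OF d rn wA])
  ultimately show ?thesis using LIMSEQ_unique by blast
qed


lemma dsum_pairs:
  fixes F :: "'a::finite \<Rightarrow> 'a \<Rightarrow> real"
  shows "(\<Sum>x\<in>UNIV. \<Sum>y\<in>UNIV - {x}. F x y) = (\<Sum>p\<in>{p::'a \<times> 'a. fst p \<noteq> snd p}. F (fst p) (snd p))"
proof -
  have e: "(SIGMA x:UNIV. UNIV - {x}) = {p::'a \<times> 'a. fst p \<noteq> snd p}" by auto
  have "(\<Sum>x\<in>UNIV. \<Sum>y\<in>UNIV - {x}. F x y) = (\<Sum>(x,y)\<in>(SIGMA x:UNIV. UNIV - {x}). F x y)"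
    by (rule sum.Sigma) auto
  also have "\<dots> = (\<Sum>p\<in>{p::'a \<times> 'a. fst p \<noteq> snd p}. F (fst p) (snd p))"
    unfolding e by (simp add: split_def)
  finally show ?thesis .
qed

lemma zeta_not_EA:
  assumes xy: "x \<noteq> y" and i: "1 \<le> i" "i < N"
  shows "\<not> in_EA A (zeta N x y i)"
proof
  assume "in_EA A (zeta N x y i)"
  then obtain z where z: "zeta N x y i = conc (sum (zeta N x y i) UNIV) z" unfolding in_EA_def by blast
  have "zeta N x y i x \<noteq> 0" "zeta N x y i y \<noteq> 0" using xy i unfolding zeta_def by auto
  then have "x = z" "y = z" using z unfolding conc_def by (metis)+
  then show False using xy by simp
qed

lemma move_up:
  assumes xy: "x \<noteq> y" and i: "i < N"
  shows "move x y (zeta N x y i) = zeta N x y (Suc i)"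
  using assms unfolding move_def zeta_def by (auto simp: fun_eq_iff)

lemma move_down:
  assumes xy: "x \<noteq> y" and i: "1 \<le> i" "i \<le> N"
  shows "move y x (zeta N x y i) = zeta N x y (i - 1)"
  using assms unfolding move_def zeta_def by (auto simp: fun_eq_iff)

lemma zeta_harm:
  fixes r :: "'a::finite \<Rightarrow> 'a \<Rightarrow> real"
  assumes d: "0 < dN" and rn: "\<forall>a b. 0 \<le> r a b" and wA: "w \<in> A"
    and xy: "x \<noteq> y" and rxy: "0 < r x y" and i: "1 \<le> i" "i < N"
  shows "\<bar>real (N - i) * (dN + real i) * r x y * (hit_prob dN r A w (zeta N x y (Suc i)) - hit_prob dN r A w (zeta N x y i))
          - real i * (dN + real (N - i)) * r y x * (hit_prob dN r A w (zeta N x y i) - hit_prob dN r A w (zeta N x y (i - 1)))\<bar>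
         \<le> real N * dN * (\<Sum>u\<in>UNIV. \<Sum>v\<in>UNIV. r u v)"
proof -
  define \<eta> where "\<eta> = zeta N x y i"
  define h where "h = hit_prob dN r A w"
  define g where "g p = incl_rate dN r \<eta> (fst p) (snd p)" for p
  define f where "f p = g p * h (move (fst p) (snd p) \<eta>)" for p
  define P where "P = {p::'a \<times> 'a. fst p \<noteq> snd p}"
  define Q where "Q = P - {(x,y),(y,x)}"
  define a where "a = real (N - i) * (dN + real i) * r x y"
  define b where "b = real i * (dN + real (N - i)) * r y x"
  have ne: "\<not> in_EA A \<eta>" unfolding \<eta>_def by (rule zeta_not_EA[OF xy i])
  have hb: "0 \<le> h e \<and> h e \<le> 1" for e unfolding h_def by (rule hp_bounds[OF d rn wA])
  have gnn: "0 \<le> g p" for p unfolding g_def by (rule rate_nn[OF d rn])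
  have ex: "\<eta> x = N - i" and ey: "\<eta> y = i" unfolding \<eta>_def zeta_def using xy by auto
  have ga: "g (x,y) = a" unfolding g_def a_def incl_rate_def using ex ey by simp
  have gb: "g (y,x) = b" unfolding g_def b_def incl_rate_def using ex ey by (simp add: mult.commute)
  have fa: "f (x,y) = a * h (zeta N x y (Suc i))"
    unfolding f_def ga using move_up[OF xy i(2)] \<eta>_def by simp
  have fb: "f (y,x) = b * h (zeta N x y (i - 1))"
    unfolding f_def gb using move_down[OF xy i(1)] i(2) \<eta>_def by simp
  have sub: "{(x,y),(y,x)} \<subseteq> P" unfolding P_def using xy by auto
  have split: "sum k P = k (x,y) + k (y,x) + sum k Q" for k :: "'a \<times> 'a \<Rightarrow> real"
  proof -
    have "sum k P = sum k (P - {(x,y),(y,x)}) + sum k {(x,y),(y,x)}"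
      by (rule sum.subset_diff[OF sub]) simp
    also have "sum k {(x,y),(y,x)} = k (x,y) + k (y,x)" using xy by simp
    finally show ?thesis unfolding Q_def by simp
  qed
  define c where "c = sum g Q"
  define F where "F = sum f Q"
  have T: "incl_total dN r \<eta> = a + b + c"
  proof -
    have "incl_total dN r \<eta> = sum g P" unfolding incl_total_def dsum_pairs g_def P_def by simp
    then show ?thesis using split[of g] ga gb c_def by simp
  qed
  have S: "(\<Sum>x\<in>UNIV. \<Sum>y\<in>UNIV - {x}. incl_rate dN r \<eta> x y * h (move x y \<eta>)) =
      a * h (zeta N x y (Suc i)) + b * h (zeta N x y (i - 1)) + F"
    unfolding dsum_pairs using split[of f] fa fb F_def unfolding f_def g_def P_def by simp
  have F0: "0 \<le> F" unfolding F_def f_def using gnn hb by (intro sum_nonneg) simp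
  have F1: "F \<le> c" unfolding F_def c_def f_def using gnn hb by (intro sum_mono) (simp add: mult_left_le)
  have a0: "0 < a" unfolding a_def using i d rxy by simp
  have b0: "0 \<le> b" unfolding b_def using d rn by simp
  have c0: "0 \<le> c" unfolding c_def using gnn by (simp add: sum_nonneg)
  have harm: "h \<eta> = (a * h (zeta N x y (Suc i)) + b * h (zeta N x y (i - 1)) + F) / (a + b + c)"
    using hp_harm[OF d rn wA ne] unfolding h_def[symmetric] S T .
  then have harm2: "(a + b + c) * h \<eta> = a * h (zeta N x y (Suc i)) + b * h (zeta N x y (i - 1)) + F"
    using a0 b0 c0 by (simp add: field_simps)
  have cb: "c \<le> real N * dN * (\<Sum>u\<in>UNIV. \<Sum>v\<in>UNIV. r u v)"
  proof -
    have "c \<le> (\<Sum>p\<in>Q. real N * dN * r (fst p) (snd p))"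
      unfolding c_def
    proof (rule sum_mono)
      fix p assume p: "p \<in> Q"
      obtain u v where uv: "p = (u, v)" by fastforce
      have uv2: "u \<noteq> v" "(u, v) \<noteq> (x, y)" "(u, v) \<noteq> (y, x)" using p uv unfolding Q_def P_def by auto
      have zz: "\<eta> u = 0 \<or> \<eta> v = 0" using uv2 unfolding \<eta>_def zeta_def by auto
      have le: "\<eta> u \<le> N" unfolding \<eta>_def zeta_def using i by auto
      show "g p \<le> real N * dN * r (fst p) (snd p)"
      proof (cases "\<eta> u = 0")
        case True then show ?thesis unfolding g_def uv incl_rate_def using rn d by simp
      next
        case False
        then have "\<eta> v = 0" using zz by simp
        then have "g p = real (\<eta> u) * dN * r u v" unfolding g_def uv incl_rate_def by simp
        also have "\<dots> \<le> real N * dN * r u v"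
          using le rn d by (intro mult_right_mono) auto
        finally show ?thesis using uv by simp
      qed
    qed
    also have "\<dots> = real N * dN * (\<Sum>p\<in>Q. r (fst p) (snd p))" by (simp add: sum_distrib_left)
    also have "(\<Sum>p\<in>Q. r (fst p) (snd p)) \<le> (\<Sum>p\<in>UNIV. r (fst p) (snd p))"
      using rn by (intro sum_mono2) auto
    also have "(\<Sum>p\<in>UNIV. r (fst p) (snd p)) = (\<Sum>u\<in>UNIV. \<Sum>v\<in>UNIV. r u v)"
      by (simp add: UNIV_Times_UNIV[symmetric] sum.cartesian_product split_def del: UNIV_Times_UNIV)
    finally show ?thesis using d by (simp add: mult_left_mono)
  qed
  have "a * (h (zeta N x y (Suc i)) - h \<eta>) - b * (h \<eta> - h (zeta N x y (i - 1))) = c * h \<eta> - F"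
    using harm2 by (simp add: algebra_simps)
  moreover have "\<bar>c * h \<eta> - F\<bar> \<le> c"
  proof -
    have "0 \<le> c * h \<eta>" "c * h \<eta> \<le> c" using c0 hb[of \<eta>] by (simp_all add: mult_left_le)
    then show ?thesis using F0 F1 by linarith
  qed
  ultimately show ?thesis using cb unfolding a_def b_def h_def \<eta>_def by linarith
qed


lemma rho_le:
  fixes q d m j :: real
  assumes q: "0 < q" and d: "0 < d" and m: "1 \<le> m" and j: "1 \<le> j"
  shows "q * m * (d + j) / (j * (d + m)) \<le> q * (1 + d)"
proof -
  have e: "(1 + d) * (j * (d + m)) - m * (d + j) = j * d + d * d * j + d * m * (j - 1)" by algebra
  have "0 \<le> d * m * (j - 1)" using d m j by simp
  moreover have "0 \<le> d * d * j" using d j by simp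
  moreover have "0 \<le> j * d" using d j by simp
  ultimately have "m * (d + j) \<le> (1 + d) * (j * (d + m))" using e by linarith
  then have "q * (m * (d + j)) \<le> q * ((1 + d) * (j * (d + m)))" using q by (intro mult_left_mono) auto
  moreover have "0 < j * (d + m)" using d m j by simp
  ultimately show ?thesis by (simp add: pos_divide_le_eq mult.assoc mult.left_commute)
qed

lemma det:
  fixes hh :: "nat \<Rightarrow> real" and q d q' K :: real and N :: nat
  assumes q0: "0 < q" and q1: "q < 1" and d: "0 < d" and qq: "q * (1 + d) \<le> q'" and q'1: "q' < 1"
    and N: "2 \<le> N" and K: "0 \<le> K"
    and hb: "\<forall>j. 0 \<le> hh j \<and> hh j \<le> 1"
    and rec: "\<forall>i. 1 \<le> i \<longrightarrow> i < N \<longrightarrow>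
       \<bar>real (N - i) * (d + real i) * (hh (Suc i) - hh i) - q * real i * (d + real (N - i)) * (hh i - hh (i - 1))\<bar> \<le> K * real N * d"
  shows "\<bar>hh 1 - hh 0 - (1 - q) / (1 - q ^ N) * (hh N - hh 0)\<bar>
           \<le> (\<Sum>k<N - 1. (K + 1) * real N * d / (real (Suc k) * real (N - Suc k))) / (1 - q')
       \<and> \<bar>hh N - hh (N - 1) - q ^ (N - 1) * (1 - q) / (1 - q ^ N) * (hh N - hh 0)\<bar>
           \<le> (\<Sum>k<N - 1. (K + 1) * real N * d / (real (Suc k) * real (N - Suc k))) / (1 - q')
             + (\<Sum>k<N - 1. (K + 1) * real N * d / (real (Suc k) * real (N - Suc k)))"
proof -
  define M where "M = N - 1"
  have NM: "N = Suc M" unfolding M_def using N by simp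
  define D where "D = hh N - hh 0"
  define S0 where "S0 = (\<Sum>k<N. q ^ k)"
  define t where "t k = D * q ^ k / S0" for k
  define \<delta> where "\<delta> k = (hh (Suc k) - hh k) - t k" for k
  define \<rho> where "\<rho> k = (if Suc k < N then q * real (Suc k) * (d + real (N - Suc k)) / (real (N - Suc k) * (d + real (Suc k))) else 0)" for k
  define \<eta> where "\<eta> k = (K + 1) * real N * d / (real (Suc k) * real (N - Suc k))" for k
  have S0ge: "q ^ k \<le> S0" if "k < N" for k
    unfolding S0_def using that q0 by (intro member_le_sum) auto
  have S0pos: "1 \<le> S0" using S0ge[of 0] N by simp
  have S0eq: "S0 = (1 - q ^ N) / (1 - q)" unfolding S0_def using q1 by (simp add: sum_gp_strict)
  have qN: "q ^ N < 1" using q0 q1 N by (simp add: power_less_one_iff)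
  have D1: "\<bar>D\<bar> \<le> 1" unfolding D_def using hb[rule_format, of N] hb[rule_format, of 0] by linarith
  have tb: "\<bar>t k\<bar> \<le> 1" if "k < N" for k
  proof -
    have "\<bar>t k\<bar> = \<bar>D\<bar> * (q ^ k / S0)" unfolding t_def using q0 S0pos by (simp add: abs_mult)
    also have "\<dots> \<le> 1 * 1"
    proof (rule mult_mono)
      show "q ^ k / S0 \<le> 1" using S0ge[OF that] S0pos by simp
    qed (use D1 q0 S0pos in auto)
    finally show ?thesis by simp
  qed
  have rho: "\<forall>k. 0 \<le> \<rho> k \<and> \<rho> k \<le> q'"
  proof
    fix k
    show "0 \<le> \<rho> k \<and> \<rho> k \<le> q'"
    proof (cases "Suc k < N")
      case True
      have "\<rho> k \<le> q * (1 + d)" unfolding \<rho>_def using True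
        by (simp only: if_True) (rule rho_le[OF q0 d], use True in auto)
      moreover have "0 \<le> \<rho> k" unfolding \<rho>_def using True q0 d by simp
      ultimately show ?thesis using qq by simp
    next
      case False
      have "0 < q * (1 + d)" using q0 d by simp
      then have "0 \<le> q'" using qq by linarith
      then show ?thesis unfolding \<rho>_def using False by simp
    qed
  qed
  have eta: "\<forall>k. 0 \<le> \<eta> k" unfolding \<eta>_def using K d by simp
  have recd: "\<forall>k. k < M \<longrightarrow> \<bar>\<delta> (Suc k) - \<rho> k * \<delta> k\<bar> \<le> \<eta> k"
  proof (intro allI impI)
    fix k assume k: "k < M"
    define m where "m = real (Suc k)"
    define j where "j = real (N - Suc k)"
    have m1: "1 \<le> m" unfolding m_def by simp
    have j1: "1 \<le> j" unfolding j_def using k NM by simp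
    have mj: "m + j = real N" unfolding m_def j_def using k NM by simp
    have rk: "\<rho> k = (q * m * (d + j)) / (j * (d + m))" unfolding \<rho>_def m_def j_def using k NM by simp
    have ek: "\<eta> k = (K + 1) * real N * d / (m * j)" unfolding \<eta>_def m_def j_def by simp
    have r1: "\<bar>(j * (d + m)) * (hh (Suc (Suc k)) - hh (Suc k)) - (q * m * (d + j)) * (hh (Suc k) - hh k)\<bar> \<le> K * real N * d"
      using rec[rule_format, of "Suc k"] k NM unfolding m_def j_def by simp
    have bq: "\<bar>q * m * (d + j) - q * (j * (d + m))\<bar> \<le> d * real N"
    proof -
      have "q * m * (d + j) - q * (j * (d + m)) = q * d * (m - j)" by algebra
      then have "\<bar>q * m * (d + j) - q * (j * (d + m))\<bar> = q * d * \<bar>m - j\<bar>" using q0 d by (simp add: abs_mult)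
      also have "\<dots> \<le> 1 * d * real N"
      proof (rule mult_mono)
        show "\<bar>m - j\<bar> \<le> real N" using mj m1 j1 by linarith
      qed (use q0 q1 d in auto)
      finally show ?thesis by simp
    qed
    have mjpos: "0 < m * j" using m1 j1 by simp
    have mjle: "m * j \<le> j * (d + m)" using d j1 m1 by (simp add: algebra_simps)
    note sb = step_bound[OF mjpos mjle r1 bq tb[of k]]
    have tS: "t (Suc k) = q * t k" unfolding t_def by simp
    have eqd: "\<delta> (Suc k) - \<rho> k * \<delta> k = (hh (Suc (Suc k)) - hh (Suc k) - q * t k) - (q * m * (d + j)) / (j * (d + m)) * (hh (Suc k) - hh k - t k)"
      unfolding \<delta>_def tS rk by simp
    show "\<bar>\<delta> (Suc k) - \<rho> k * \<delta> k\<bar> \<le> \<eta> k" unfolding eqd ek by (rule sb) (use k NM in simp)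
  qed
  have sumd: "(\<Sum>k<Suc M. \<delta> k) = 0"
  proof -
    have "(\<Sum>k<N. \<delta> k) = (\<Sum>k<N. hh (Suc k) - hh k) - (\<Sum>k<N. t k)" unfolding \<delta>_def by (simp add: sum_subtractf)
    also have "(\<Sum>k<N. hh (Suc k) - hh k) = D" unfolding D_def by (rule sum_lessThan_telescope)
    also have "(\<Sum>k<N. t k) = D * S0 / S0" unfolding t_def S0_def by (simp add: sum_divide_distrib[symmetric] sum_distrib_left)
    also have "\<dots> = D" using S0pos by simp
    finally show ?thesis using NM by simp
  qed
  have b0: "\<bar>\<delta> 0\<bar> \<le> (\<Sum>k<M. \<eta> k) / (1 - q')" by (rule abs_part_bound[OF q'1 rho eta recd sumd])
  have rho1: "\<forall>k. 0 \<le> \<rho> k \<and> \<rho> k \<le> 1" using rho q'1 by (meson less_imp_le order_trans)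
  have bM: "\<bar>\<delta> M\<bar> \<le> \<bar>\<delta> 0\<bar> + (\<Sum>k<M. \<eta> k)" by (rule abs_prop_bound[OF rho1 recd]) simp
  have iS0: "(1 - q) / (1 - q ^ N) = 1 / S0" unfolding S0eq using q1 qN by simp
  have e1: "hh 1 - hh 0 - (1 - q) / (1 - q ^ N) * (hh N - hh 0) = \<delta> 0"
    unfolding \<delta>_def t_def iS0 D_def by simp
  have e2: "hh N - hh (N - 1) - q ^ (N - 1) * (1 - q) / (1 - q ^ N) * (hh N - hh 0) = \<delta> M"
  proof -
    have NM1: "N - 1 = M" unfolding M_def ..
    have c: "q ^ M * (1 - q) / (1 - q ^ N) = q ^ M * (1 / S0)"
      by (simp only: times_divide_eq_right[symmetric] iS0)
    show ?thesis unfolding \<delta>_def t_def D_def NM1 c unfolding NM[symmetric]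
      by (simp add: divide_inverse algebra_simps)
  qed
  show ?thesis unfolding e1 e2 using b0 bM unfolding \<eta>_def M_def by linarith
qed


lemma E_bound:
  fixes K d :: real and N :: nat
  assumes N: "3 \<le> N" and K: "0 \<le> K" and d: "0 \<le> d"
  shows "(\<Sum>k<N - 1. (K + 1) * real N * d / (real (Suc k) * real (N - Suc k))) \<le> (K + 1) * d * 4 * ln (real N)"
proof -
  define g where "g i = 1 / real (Suc i)" for i
  have tm: "(K + 1) * real N * d / (real (Suc k) * real (N - Suc k)) = (K + 1) * d * (g k + 1 / real (N - Suc k))"
    if k: "k < N - 1" for k
  proof -
    have m: "0 < real (Suc k)" and j: "0 < real (N - Suc k)" using k by auto
    have mj: "real N = real (Suc k) + real (N - Suc k)" using k by simp
    show ?thesis unfolding g_def mj using m j by (simp add: field_simps)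
  qed
  have rfl: "(\<Sum>k<N - 1. 1 / real (N - Suc k)) = (\<Sum>k<N - 1. g k)"
  proof -
    have "(\<Sum>k<N - 1. 1 / real (N - Suc k)) = (\<Sum>k<N - 1. g (N - 1 - Suc k))"
      by (rule sum.cong) (auto simp: g_def Suc_diff_Suc)
    also have "\<dots> = (\<Sum>k<N - 1. g k)" by (rule sum.nat_diff_reindex)
    finally show ?thesis .
  qed
  have H: "(\<Sum>k<N - 1. g k) \<le> 1 + ln (real (N - 1))" unfolding g_def using N by (intro harm_ln) simp
  have l1: "ln (real (N - 1)) \<le> ln (real N)" using N by simp
  have l2: "1 \<le> ln (real N)"
  proof -
    have "exp 1 \<le> real N" using exp_le N by linarith
    then show ?thesis using N by (simp add: ln_ge_iff)
  qed
  have "(\<Sum>k<N - 1. (K + 1) * real N * d / (real (Suc k) * real (N - Suc k)))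
      = (\<Sum>k<N - 1. (K + 1) * d * (g k + 1 / real (N - Suc k)))" by (rule sum.cong[OF refl], rule tm) simp
  also have "\<dots> = (K + 1) * d * ((\<Sum>k<N - 1. g k) + (\<Sum>k<N - 1. 1 / real (N - Suc k)))"
    by (simp only: sum_distrib_left[symmetric] sum.distrib)
  also have "\<dots> = (K + 1) * d * (2 * (\<Sum>k<N - 1. g k))" unfolding rfl by simp
  also have "\<dots> \<le> (K + 1) * d * (2 * (2 * ln (real N)))"
    using H l1 l2 K d by (intro mult_left_mono) auto
  finally show ?thesis by simp
qed

lemma aux1:
  fixes c u h1 h0 hN :: real
  assumes "c = 1 - u"
  shows "h1 - c * h0 - u * hN = h1 - h0 - u * (hN - h0)"
  unfolding assms by (simp add: algebra_simps)

lemma aux2: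
  fixes c1 c2 v hm h0 hN :: real
  assumes "c1 = v" "c2 = 1 - v"
  shows "\<bar>hm - c1 * h0 - c2 * hN\<bar> = \<bar>hN - hm - v * (hN - h0)\<bar>"
proof -
  have "hm - c1 * h0 - c2 * hN = - (hN - hm - v * (hN - h0))" unfolding assms by (simp add: algebra_simps)
  then show ?thesis by simp
qed

lemma coef1:
  fixes q Q :: real
  assumes "1 - Q \<noteq> 0"
  shows "(q - Q) / (1 - Q) = 1 - (1 - q) / (1 - Q)"
  using assms by (simp add: field_simps)

lemma coef2:
  fixes q p :: real
  assumes "1 - q * p \<noteq> 0"
  shows "(p - q * p) / (1 - q * p) = p * (1 - q) / (1 - q * p)"
    and "(1 - p) / (1 - q * p) = 1 - p * (1 - q) / (1 - q * p)"
  using assms by (simp_all add: field_simps)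


theorem lemma4p8:
  fixes r :: "'a::finite \<Rightarrow> 'a \<Rightarrow> real" and d :: "nat \<Rightarrow> real"
    and A :: "'a set" and w x y :: 'a
  assumes r_nonneg: "\<forall>a b. 0 \<le> r a b"
    and r_diag: "\<forall>a. r a a = 0"
    and irred: "\<forall>a b. (a, b) \<in> {(u, v). 0 < r u v}\<^sup>*"
    and d_pos: "\<forall>N. 0 < d N"
    and d_lim: "d \<longlonglongrightarrow> 0"
    and A_ne: "A \<noteq> {}" and wA: "w \<in> A"
    and xy: "x \<noteq> y" and rates: "r x y > r y x" "r y x > 0"
  shows "(\<lambda>N. let q = r y x / r x y in
            \<bar>hit_prob (d N) r A w (zeta N x y 1)
             - (q - q ^ N) / (1 - q ^ N) * hit_prob (d N) r A w (conc N x)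
             - (1 - q) / (1 - q ^ N) * hit_prob (d N) r A w (conc N y)\<bar>)
          \<in> O(\<lambda>N. d N * ln (real N))
       \<and> (\<lambda>N. let q = r y x / r x y in
            \<bar>hit_prob (d N) r A w (zeta N x y (N - 1))
             - (q ^ (N - 1) - q ^ N) / (1 - q ^ N) * hit_prob (d N) r A w (conc N x)
             - (1 - q ^ (N - 1)) / (1 - q ^ N) * hit_prob (d N) r A w (conc N y)\<bar>)
          \<in> O(\<lambda>N. d N * ln (real N))"
proof -
  define q where "q = r y x / r x y"
  have rxy: "0 < r x y" using rates by linarith
  have q0: "0 < q" unfolding q_def using rates rxy by simp
  have q1: "q < 1" unfolding q_def using rates rxy by simp
  have ryx: "r y x = q * r x y" unfolding q_def using rxy by simp
  define q' where "q' = (1 + q) / 2"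
  have q'1: "q' < 1" unfolding q'_def using q1 by simp
  define R where "R = (\<Sum>u\<in>UNIV. \<Sum>v\<in>UNIV. r u v)"
  define K where "K = R / r x y"
  have K0: "0 \<le> K" unfolding K_def R_def using r_nonneg rxy by (simp add: sum_nonneg)
  define E where "E N = (\<Sum>k<N - 1. (K + 1) * real N * d N / (real (Suc k) * real (N - Suc k)))" for N
  define C where "C = (1 / (1 - q') + 1) * ((K + 1) * 4)"
  have bnd: "\<bar>hit_prob (d N) r A w (zeta N x y 1)
             - (q - q ^ N) / (1 - q ^ N) * hit_prob (d N) r A w (conc N x)
             - (1 - q) / (1 - q ^ N) * hit_prob (d N) r A w (conc N y)\<bar> \<le> C * (d N * ln (real N))
     \<and> \<bar>hit_prob (d N) r A w (zeta N x y (N - 1))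
             - (q ^ (N - 1) - q ^ N) / (1 - q ^ N) * hit_prob (d N) r A w (conc N x)
             - (1 - q ^ (N - 1)) / (1 - q ^ N) * hit_prob (d N) r A w (conc N y)\<bar> \<le> C * (d N * ln (real N))"
    if N3: "3 \<le> N" and dN: "d N \<le> (1 - q) / (2 * q)" for N
  proof -
    define dd where "dd = d N"
    have dd0: "0 < dd" unfolding dd_def using d_pos by simp
    define hh where "hh j = hit_prob dd r A w (zeta N x y j)" for j
    have qq: "q * (1 + dd) \<le> q'"
    proof -
      have "q * dd \<le> (1 - q) / 2" using dN q0 unfolding dd_def by (simp add: pos_le_divide_eq algebra_simps)
      then show ?thesis unfolding q'_def by (simp add: algebra_simps)
    qed
    have hb: "\<forall>j. 0 \<le> hh j \<and> hh j \<le> 1" unfolding hh_def using hp_bounds[OF dd0 r_nonneg wA] by blast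
    have rec: "\<forall>i. 1 \<le> i \<longrightarrow> i < N \<longrightarrow>
       \<bar>real (N - i) * (dd + real i) * (hh (Suc i) - hh i) - q * real i * (dd + real (N - i)) * (hh i - hh (i - 1))\<bar> \<le> K * real N * dd"
    proof (intro allI impI)
      fix i assume i1: "1 \<le> i" and iN: "i < N"
      note zh = zeta_harm[OF dd0 r_nonneg wA xy rxy i1 iN]
      define T where "T = real (N - i) * (dd + real i) * (hh (Suc i) - hh i) - q * real i * (dd + real (N - i)) * (hh i - hh (i - 1))"
      have eq: "real (N - i) * (dd + real i) * r x y * (hh (Suc i) - hh i)
          - real i * (dd + real (N - i)) * r y x * (hh i - hh (i - 1)) = r x y * T"
        unfolding T_def ryx by algebra
      have "\<bar>r x y * T\<bar> \<le> real N * dd * R" using zh unfolding eq[symmetric] hh_def R_def .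
      then have "r x y * \<bar>T\<bar> \<le> r x y * (K * real N * dd)"
        unfolding K_def using rxy by (simp add: abs_mult mult_ac)
      then have "\<bar>T\<bar> \<le> K * real N * dd" using rxy by simp
      then show "\<bar>real (N - i) * (dd + real i) * (hh (Suc i) - hh i) - q * real i * (dd + real (N - i)) * (hh i - hh (i - 1))\<bar> \<le> K * real N * dd"
        unfolding T_def .
    qed
    have N2: "2 \<le> N" using N3 by simp
    note dt = det[OF q0 q1 dd0 qq q'1 N2 K0 hb rec]
    have EN: "E N = (\<Sum>k<N - 1. (K + 1) * real N * dd / (real (Suc k) * real (N - Suc k)))"
      unfolding E_def dd_def ..
    have Eb: "E N \<le> (K + 1) * dd * 4 * ln (real N)" unfolding EN by (rule E_bound[OF N3 K0]) (use dd0 in simp)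
    have dN0: "0 \<le> d N" using d_pos less_imp_le by blast
    have E0: "0 \<le> E N" unfolding E_def
      by (intro sum_nonneg divide_nonneg_nonneg mult_nonneg_nonneg) (use K0 dN0 in auto)
    have q'0: "0 < 1 - q'" using q'1 by simp
    have tot: "E N / (1 - q') + E N \<le> C * (dd * ln (real N))"
    proof -
      have "E N / (1 - q') + E N = (1 / (1 - q') + 1) * E N" by (simp add: field_simps)
      also have "\<dots> \<le> (1 / (1 - q') + 1) * ((K + 1) * dd * 4 * ln (real N))"
        using Eb q'0 by (intro mult_left_mono) auto
      also have "\<dots> = C * (dd * ln (real N))" unfolding C_def by (simp add: algebra_simps)
      finally show ?thesis .
    qed
    have h0: "zeta N x y 0 = conc N x" unfolding zeta_def conc_def by auto
    have hN: "zeta N x y N = conc N y" unfolding zeta_def conc_def using xy by auto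
    have qN: "q ^ N < 1" using q0 q1 N3 by (simp add: power_less_one_iff)
    have nz: "1 - q ^ N \<noteq> 0" using qN by simp
    have e1: "hh 1 - (q - q ^ N) / (1 - q ^ N) * hh 0 - (1 - q) / (1 - q ^ N) * hh N
        = hh 1 - hh 0 - (1 - q) / (1 - q ^ N) * (hh N - hh 0)"
      by (rule aux1[OF coef1[OF nz]])
    define p where "p = q ^ (N - 1)"
    have qNp: "q ^ N = q * p" unfolding p_def using N3 by (simp add: power_eq_if[of q N])
    have nz2: "1 - q * p \<noteq> 0" using nz qNp by simp
    have e2: "\<bar>hh (N - 1) - (q ^ (N - 1) - q ^ N) / (1 - q ^ N) * hh 0 - (1 - q ^ (N - 1)) / (1 - q ^ N) * hh N\<bar>
        = \<bar>hh N - hh (N - 1) - q ^ (N - 1) * (1 - q) / (1 - q ^ N) * (hh N - hh 0)\<bar>"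
      unfolding qNp p_def[symmetric] by (rule aux2[OF coef2[OF nz2]])
    have "C * (dd * ln (real N)) \<ge> E N / (1 - q')" using tot E0 by linarith
    moreover note dt1 = conjunct1[OF dt, folded EN] and dt2 = conjunct2[OF dt, folded EN]
    ultimately have g1: "\<bar>hh 1 - (q - q ^ N) / (1 - q ^ N) * hh 0 - (1 - q) / (1 - q ^ N) * hh N\<bar> \<le> C * (dd * ln (real N))"
      and g2: "\<bar>hh (N - 1) - (q ^ (N - 1) - q ^ N) / (1 - q ^ N) * hh 0 - (1 - q ^ (N - 1)) / (1 - q ^ N) * hh N\<bar> \<le> C * (dd * ln (real N))"
      unfolding e1 e2 using tot by linarith+
    show ?thesis using g1 g2 unfolding hh_def h0 hN dd_def by simp
  qed
  have ev: "eventually (\<lambda>N. 3 \<le> N \<and> d N \<le> (1 - q) / (2 * q)) sequentially"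
  proof -
    have "0 < (1 - q) / (2 * q)" using q0 q1 by simp
    then have "eventually (\<lambda>N. d N < (1 - q) / (2 * q)) sequentially"
      using d_lim by (rule order_tendstoD(2)[rotated])
    then show ?thesis using eventually_ge_at_top[of 3] by eventually_elim auto
  qed
  have nrm: "norm (d N * ln (real N)) = d N * ln (real N)" if "3 \<le> N" for N
  proof -
    have "0 \<le> d N" using d_pos less_imp_le by blast
    moreover have "0 \<le> ln (real N)" using that by simp
    ultimately show ?thesis by simp
  qed
  show ?thesis unfolding Let_def q_def[symmetric]
  proof (intro conjI bigoI)
    show "eventually (\<lambda>N. norm \<bar>hit_prob (d N) r A w (zeta N x y 1)
             - (q - q ^ N) / (1 - q ^ N) * hit_prob (d N) r A w (conc N x)
             - (1 - q) / (1 - q ^ N) * hit_prob (d N) r A w (conc N y)\<bar> \<le> C * norm (d N * ln (real N))) sequentially"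
      using ev by eventually_elim (use bnd nrm in auto)
    show "eventually (\<lambda>N. norm \<bar>hit_prob (d N) r A w (zeta N x y (N - 1))
             - (q ^ (N - 1) - q ^ N) / (1 - q ^ N) * hit_prob (d N) r A w (conc N x)
             - (1 - q ^ (N - 1)) / (1 - q ^ N) * hit_prob (d N) r A w (conc N y)\<bar> \<le> C * norm (d N * ln (real N))) sequentially"
      using ev by eventually_elim (use bnd nrm in auto)
  qed
qed

end
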